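(* Let $(d_i)_{i\ge1}$ be an alternate Lyndon word with alternate Lyndon system $M$, and suppose the entropy of $M$ equals $\log\beta>0$. Then $\beta$ is the largest real solution $x$ of $$-\frac{x}{x+1}=\sum_{n\ge1}\frac{d_n}{(-x)^n}.$$
   Context: Alternate order: for two words $x=x_1x_2\cdots$, $y=y_1y_2\cdots$ over a finite alphabet of integers, $x\prec y$ iff there is $k$ with $x_i=y_i$ for all $i<k$ and $(-1)^k(x_k-y_k)<0$; $x\preceq y$ iff $x=y$ or $x\prec y$. An alternate Lyndon word is an infinite word $(d_i)_{i\ge1}$ over a finite alphabet $\{0,\dots,d_1\}$ with $d_1d_2\cdots\preceq d_nd_{n+1}\cdots$ for all $n\ge1$. Its alternate Lyndon system $M$ is the set of infinite words $x_1x_2\cdots$ with $d_1d_2\cdots\preceq x_kx_{k+1}\cdots$ for all $k\ge1$. The entropy of $M$ is $\lim_{n\to\infty}\frac1n\log H_n$, where $H_n$ is the number of words of length $n$ occurring as finite factors of elements of $M$. *)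

theory Defs
  imports "HOL-Analysis.Analysis"
begin

text \<open>Infinite words are represented 0-based: a word x_1 x_2 ... is the function
  w :: nat \<Rightarrow> nat with w i = x_(i+1).  The shift by k is (\<lambda>i. w (i+k)).\<close>

definition alt_less :: "(nat \<Rightarrow> nat) \<Rightarrow> (nat \<Rightarrow> nat) \<Rightarrow> bool" where
  "alt_less x y \<longleftrightarrow>
     (\<exists>k. (\<forall>i<k. x i = y i) \<and> (-1::int) ^ (k + 1) * (int (x k) - int (y k)) < 0)"

definition alt_le :: "(nat \<Rightarrow> nat) \<Rightarrow> (nat \<Rightarrow> nat) \<Rightarrow> bool" where
  "alt_le x y \<longleftrightarrow> x = y \<or> alt_less x y"

definition shift :: "nat \<Rightarrow> (nat \<Rightarrow> nat) \<Rightarrow> (nat \<Rightarrow> nat)" where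
  "shift k x = (\<lambda>i. x (i + k))"

definition alt_lyndon :: "(nat \<Rightarrow> nat) \<Rightarrow> bool" where
  "alt_lyndon d \<longleftrightarrow> (\<forall>i. d i \<le> d 0) \<and> (\<forall>n. alt_le d (shift n d))"

definition alt_lyndon_system :: "(nat \<Rightarrow> nat) \<Rightarrow> (nat \<Rightarrow> nat) set" where
  "alt_lyndon_system d = {x. \<forall>k. alt_le d (shift k x)}"

definition factors :: "(nat \<Rightarrow> nat) set \<Rightarrow> nat \<Rightarrow> nat list set" where
  "factors M n = {map x [k..<k + n] | x k. x \<in> M}"

definition has_entropy :: "(nat \<Rightarrow> nat) set \<Rightarrow> real \<Rightarrow> bool" where
  "has_entropy M h \<longleftrightarrow> (\<lambda>n. ln (real (card (factors M n))) / real n) \<longlonglongrightarrow> h"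

definition char_solution :: "(nat \<Rightarrow> nat) \<Rightarrow> real \<Rightarrow> bool" where
  "char_solution d x \<longleftrightarrow> x \<noteq> 0 \<and> x \<noteq> -1 \<and>
     (\<lambda>n. real (d n) / (- x) ^ (n + 1)) sums (- x / (x + 1))"

end

theory Submission
  imports Defs
begin


function flt :: "nat list \<Rightarrow> nat list \<Rightarrow> bool" where
  "flt (a#u) (b#v) = (b < a \<or> (a = b \<and> flt v u))"
| "flt [] _ = False"
| "flt (a#u) [] = False"
  by pat_completeness auto
termination by (relation "Wellfounded.measure (\<lambda>(u,v). length u + length v)") auto

definition fle :: "nat list \<Rightarrow> nat list \<Rightarrow> bool" where
  "fle u v \<longleftrightarrow> u = v \<or> flt u v"

definition pre :: "(nat \<Rightarrow> nat) \<Rightarrow> nat \<Rightarrow> nat list" where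
  "pre x n = map x [0..<n]"

lemma flt_Nil2[simp]: "\<not> flt u []" by (cases u) auto

lemma flt_irrefl: "\<not> flt u u"
  by (induction u) auto

lemma flt_asym: "flt u v \<Longrightarrow> \<not> flt v u"
  by (induction u arbitrary: v) (auto elim: flt.elims)

lemma flt_total: "length u = length v \<Longrightarrow> u \<noteq> v \<Longrightarrow> flt u v \<or> flt v u"
proof (induction u arbitrary: v)
  case Nil then show ?case by simp
next
  case (Cons a u) then show ?case by (cases v) auto
qed

lemma flt_trans_aux: "(\<forall>v w. (flt u v \<longrightarrow> flt v w \<longrightarrow> flt u w) \<and> (flt w v \<longrightarrow> flt v u \<longrightarrow> flt w u))"
proof (induction u)
  case Nil then show ?case by (auto elim: flt.elims)
next
  case (Cons a u)
  show ?case
  proof (intro allI conjI impI)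
    fix v w assume "flt (a#u) v" "flt v w"
    then show "flt (a#u) w" using Cons by (cases v; cases w) auto
  next
    fix v w assume "flt w v" "flt v (a#u)"
    then show "flt w (a#u)" using Cons by (cases v; cases w) auto
  qed
qed

lemma flt_trans: "flt u v \<Longrightarrow> flt v w \<Longrightarrow> flt u w"
  using flt_trans_aux by blast

lemma fle_trans: "fle u v \<Longrightarrow> fle v w \<Longrightarrow> fle u w"
  unfolding fle_def using flt_trans by blast

lemma fle_antisym: "fle u v \<Longrightarrow> fle v u \<Longrightarrow> u = v"
  unfolding fle_def using flt_asym by blast

lemma not_flt_fle: "length u = length v \<Longrightarrow> \<not> flt v u \<longleftrightarrow> fle u v"
  unfolding fle_def using flt_total flt_asym flt_irrefl by blast

lemma flt_take_aux: "\<forall>v j. (flt (take j u) (take j v) \<longrightarrow> flt u v) \<and> (flt (take j v) (take j u) \<longrightarrow> flt v u)"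
proof (induction u)
  case Nil then show ?case by simp
next
  case (Cons a u)
  show ?case
  proof (intro allI)
    fix v j show "(flt (take j (a#u)) (take j v) \<longrightarrow> flt (a#u) v) \<and> (flt (take j v) (take j (a#u)) \<longrightarrow> flt v (a#u))"
      using Cons by (cases v; cases j) auto
  qed
qed

lemma flt_take: "flt (take j u) (take j v) \<Longrightarrow> flt u v"
  using flt_take_aux by blast

lemma pre_Suc: "pre x (Suc m) = x 0 # pre (shift 1 x) m"
  unfolding pre_def shift_def by (simp add: map_upt_Suc del: upt_Suc)

lemma shift_shift: "shift a (shift b x) = shift (a + b) x"
  unfolding shift_def by (simp add: add.assoc)

lemma shift_0[simp]: "shift 0 x = x" unfolding shift_def by simp

lemma flt_pre_imp: "flt (pre x n) (pre y n) \<Longrightarrow>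
   (\<exists>k<n. (\<forall>i<k. x i = y i) \<and> (-1::int) ^ (k + 1) * (int (x k) - int (y k)) < 0)"
proof (induction n arbitrary: x y)
  case 0 then show ?case by (simp add: pre_def)
next
  case (Suc n)
  from Suc.prems have "y 0 < x 0 \<or> (x 0 = y 0 \<and> flt (pre (shift 1 y) n) (pre (shift 1 x) n))"
    by (simp add: pre_Suc)
  then show ?case
  proof
    assume "y 0 < x 0" then show ?thesis by (intro exI[of _ 0]) auto
  next
    assume h: "x 0 = y 0 \<and> flt (pre (shift 1 y) n) (pre (shift 1 x) n)"
    then obtain k where k: "k < n" "\<forall>i<k. y (i+1) = x (i+1)"
      "(-1::int) ^ (k + 1) * (int (y (k+1)) - int (x (k+1))) < 0"
      using Suc.IH[of "shift 1 y" "shift 1 x"] unfolding shift_def by auto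
    have "\<forall>i<Suc k. x i = y i"
    proof (intro allI impI)
      fix i assume "i < Suc k" then show "x i = y i" using h k(2) by (cases i) auto
    qed
    moreover have "(-1::int) ^ (Suc k + 1) * (int (x (Suc k)) - int (y (Suc k))) < 0"
      using k(3) by (simp add: algebra_simps)
    ultimately show ?thesis using k(1) by (intro exI[of _ "Suc k"]) auto
  qed
qed

lemma flt_pre_alt_less: "flt (pre x n) (pre y n) \<Longrightarrow> alt_less x y"
  unfolding alt_less_def using flt_pre_imp by blast

lemma alt_less_asym: "alt_less x y \<Longrightarrow> \<not> alt_less y x"
proof
  assume "alt_less x y" "alt_less y x"
  then obtain k l where k: "\<forall>i<k. x i = y i" "(-1::int) ^ (k + 1) * (int (x k) - int (y k)) < 0"
    and l: "\<forall>i<l. y i = x i" "(-1::int) ^ (l + 1) * (int (y l) - int (x l)) < 0"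
    unfolding alt_less_def by blast
  show False
  proof (cases k l rule: linorder_cases)
    case less then show ?thesis using k l by auto
  next
    case greater then show ?thesis using k l by auto
  next
    case equal then show ?thesis using k l by (simp add: algebra_simps)
  qed
qed

lemma alt_le_not_flt: "alt_le d y \<Longrightarrow> \<not> flt (pre y m) (pre d m)"
  unfolding alt_le_def using flt_irrefl flt_pre_alt_less alt_less_asym by blast


definition FF :: "(nat \<Rightarrow> nat) \<Rightarrow> nat \<Rightarrow> nat list set" where
  "FF d n = {w. length w = n \<and> (\<forall>k\<le>n. \<not> flt (drop k w) (pre d (n - k)))}"

lemma drop_map_upt_pre: "drop j (map x [k..<k+n]) = pre (shift (k+j) x) (n-j)"
  by (rule nth_equalityI) (auto simp: pre_def shift_def add.commute add.left_commute)

lemma factor_in_FF: "x \<in> alt_lyndon_system d \<Longrightarrow> map x [k..<k+n] \<in> FF d n"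
  unfolding FF_def alt_lyndon_system_def
  using alt_le_not_flt drop_map_upt_pre by auto

lemma FF_sub_factors:
  assumes lyn: "alt_lyndon d" and w: "w \<in> FF d n"
  shows "w \<in> factors (alt_lyndon_system d) n"
proof -
  have lw: "length w = n" and nf: "\<And>k. k \<le> n \<Longrightarrow> \<not> flt (drop k w) (pre d (n - k))"
    using w unfolding FF_def by auto
  define P where "P k \<longleftrightarrow> k \<le> n \<and> drop k w = pre d (n - k)" for k
  have Pn: "P n" unfolding P_def using lw by (simp add: pre_def)
  define k0 where "k0 = (LEAST k. P k)"
  have Pk0: "P k0" unfolding k0_def using Pn by (rule LeastI)
  have k0n: "k0 \<le> n" using Pk0 P_def by auto
  have notP: "\<And>j. j < k0 \<Longrightarrow> \<not> P j" unfolding k0_def by (rule not_less_Least)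
  define x where "x i = (if i < k0 then w ! i else d (i - k0))" for i
  have mx: "map x [0..<n] = w"
  proof (rule nth_equalityI)
    show "length (map x [0..<n]) = length w" using lw by simp
  next
    fix i assume "i < length (map x [0..<n])"
    then have i: "i < n" by simp
    show "map x [0..<n] ! i = w ! i"
    proof (cases "i < k0")
      case True then show ?thesis using i by (simp add: x_def)
    next
      case False
      have "w ! i = drop k0 w ! (i - k0)" using False i lw by simp
      also have "\<dots> = pre d (n - k0) ! (i - k0)" using Pk0 P_def by simp
      also have "\<dots> = d (i - k0)" using False i by (simp add: pre_def)
      finally show ?thesis using False i by (simp add: x_def)
    qed
  qed
  have xM: "x \<in> alt_lyndon_system d"
    unfolding alt_lyndon_system_def
  proof (intro CollectI allI)
    fix j
    show "alt_le d (shift j x)"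
    proof (cases "j < k0")
      case False
      have "shift j x = shift (j - k0) d"
        unfolding shift_def x_def using False by (auto intro!: ext)
      then show ?thesis using lyn unfolding alt_lyndon_def by simp
    next
      case True
      have jn: "j \<le> n" using True k0n by simp
      have e: "pre (shift j x) (n - j) = drop j w"
        using drop_map_upt_pre[of j x 0 n] mx by simp
      have "drop j w \<noteq> pre d (n - j)" using notP[OF True] jn P_def by auto
      moreover have "\<not> flt (drop j w) (pre d (n - j))" using nf jn by simp
      ultimately have "flt (pre d (n - j)) (drop j w)"
        using flt_total[of "drop j w" "pre d (n-j)"] lw by (auto simp: pre_def)
      then have "alt_less d (shift j x)" using e flt_pre_alt_less by metis
      then show ?thesis unfolding alt_le_def by simp
    qed
  qed
  have "w = map x [0..<0+n]" using mx by simp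
  then show ?thesis unfolding factors_def using xM by blast
qed

lemma factors_eq:
  assumes "alt_lyndon d"
  shows "factors (alt_lyndon_system d) n = FF d n"
  using FF_sub_factors[OF assms] factor_in_FF unfolding factors_def by blast


lemma length_pre[simp]: "length (pre x n) = n" by (simp add: pre_def)

lemma all_le_Suc: "(\<forall>k\<le>Suc m. P k) \<longleftrightarrow> P 0 \<and> (\<forall>k\<le>m. P (Suc k))"
  by (metis Suc_le_mono le0 not0_implies_Suc)

lemma FF_cons: "a#w \<in> FF d (Suc m) \<longleftrightarrow> w \<in> FF d m \<and> \<not> flt (a#w) (pre d (Suc m))"
  unfolding FF_def by (simp only: all_le_Suc) auto

lemma FF_0: "FF d 0 = {[]}" unfolding FF_def by (auto simp: pre_def)

lemma FF_letters: assumes "w \<in> FF d n" shows "set w \<subseteq> {..d 0}"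
proof
  fix c assume "c \<in> set w"
  then obtain i where i: "i < length w" "w ! i = c" by (auto simp: in_set_conv_nth)
  have ln: "length w = n" and h: "\<not> flt (drop i w) (pre d (n - i))"
    using assms i unfolding FF_def by auto
  have "drop i w = w ! i # drop (Suc i) w" using i(1) by (rule Cons_nth_drop_Suc[symmetric])
  moreover have "pre d (n - i) = d 0 # pre (shift 1 d) (n - i - 1)"
    using i ln pre_Suc[of d "n - i - 1"] by (simp add: Suc_diff_Suc)
  ultimately show "c \<in> {..d 0}" using h i by auto
qed

lemma FF_finite: "finite (FF d n)"
proof -
  have "FF d n \<subseteq> {xs. set xs \<subseteq> {..d 0} \<and> length xs = n}"
    using FF_letters unfolding FF_def by auto
  then show ?thesis by (rule finite_subset) (rule finite_lists_length_eq, simp)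
qed

lemma lyn_in: "alt_lyndon d \<Longrightarrow> d \<in> alt_lyndon_system d"
  unfolding alt_lyndon_def alt_lyndon_system_def by simp

lemma pre_FF: assumes "alt_lyndon d" shows "pre (shift j d) m \<in> FF d m"
proof -
  have "map d [j..<j+m] = pre (shift j d) m"
    using drop_map_upt_pre[of 0 d j m] by simp
  then show ?thesis using factor_in_FF[OF lyn_in[OF assms]] by metis
qed

lemma FF_ge: "w \<in> FF d m \<Longrightarrow> fle (pre d m) w"
  unfolding FF_def using not_flt_fle[of "pre d m" w] by (auto)

lemma lyn_fact: assumes "alt_lyndon d" "d j = d 0"
  shows "fle (pre (shift (Suc j) d) m) (pre (shift 1 d) m)"
proof -
  have "\<not> flt (pre (shift j d) (Suc m)) (pre d (Suc m))"
    using assms(1) alt_le_not_flt unfolding alt_lyndon_def by blast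
  then have "\<not> flt (pre (shift 1 d) m) (pre (shift (Suc j) d) m)"
    using assms(2) by (simp add: pre_Suc shift_shift shift_def)
  then show ?thesis using not_flt_fle by simp
qed

definition NN :: "(nat \<Rightarrow> nat) \<Rightarrow> nat \<Rightarrow> nat" where "NN d m = card (FF d m)"
definition VV :: "(nat \<Rightarrow> nat) \<Rightarrow> nat \<Rightarrow> nat \<Rightarrow> nat" where
  "VV d j m = card {w \<in> FF d m. fle (pre (shift j d) m) w}"
definition UU :: "(nat \<Rightarrow> nat) \<Rightarrow> nat \<Rightarrow> nat \<Rightarrow> nat" where
  "UU d j m = card {w \<in> FF d m. fle w (pre (shift j d) m)}"

lemma UV: assumes "alt_lyndon d" shows "UU d j m + VV d j m = NN d m + 1"
proof -
  let ?p = "pre (shift j d) m"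
  let ?A = "{w \<in> FF d m. fle w ?p}" and ?B = "{w \<in> FF d m. fle ?p w}"
  have fA: "finite ?A" and fB: "finite ?B" using FF_finite by auto
  have "?A \<union> ?B = FF d m"
    using not_flt_fle[of _ ?p] not_flt_fle[of ?p] unfolding FF_def fle_def by auto
  moreover have "?A \<inter> ?B = {?p}" using pre_FF[OF assms] fle_antisym unfolding fle_def by auto
  ultimately show ?thesis using card_Un_Int[OF fA fB] unfolding UU_def VV_def NN_def by simp
qed

lemma VV_0: "VV d 0 m = NN d m"
  unfolding VV_def NN_def using FF_ge by (metis (mono_tags, lifting) Collect_cong mem_Collect_eq shift_0 FF_def)

lemma VV_j0: "VV d j 0 = 1"
proof -
  have "{w \<in> FF d 0. fle (pre (shift j d) 0) w} = {[]}" by (auto simp: FF_0 pre_def fle_def)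
  then show ?thesis unfolding VV_def by simp
qed


lemma fle_cons: "fle (b#u) (a#v) \<longleftrightarrow> a < b \<or> (a = b \<and> fle v u)"
  unfolding fle_def by auto

lemma pre_shift_Suc: "pre (shift j d) (Suc m) = d j # pre (shift (Suc j) d) m"
  by (simp add: pre_Suc shift_shift) (simp add: shift_def)

lemma VV_Suc: assumes lyn: "alt_lyndon d"
  shows "VV d j (Suc m) = d j * NN d m + UU d (Suc j) m"
proof -
  let ?u = "pre (shift (Suc j) d) m" and ?p1 = "pre (shift 1 d) m"
  let ?S = "{w \<in> FF d (Suc m). fle (pre (shift j d) (Suc m)) w}"
  let ?X = "(\<lambda>(a,w). a#w) ` ({..<d j} \<times> FF d m)"
  let ?Y = "(Cons (d j)) ` {w\<in>FF d m. fle w ?u}"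
  have djle: "d j \<le> d 0" using lyn unfolding alt_lyndon_def by blast
  have pd: "pre d (Suc m) = d 0 # ?p1" by (simp add: pre_Suc)
  have memS: "a#w \<in> ?S \<longleftrightarrow> w \<in> FF d m \<and> \<not> (d 0 < a \<or> (a = d 0 \<and> flt ?p1 w))
        \<and> (a < d j \<or> (a = d j \<and> fle w ?u))" for a w
    by (simp add: FF_cons pd pre_shift_Suc fle_cons)
  have "?S = ?X \<union> ?Y"
  proof (intro set_eqI iffI)
    fix x assume x: "x \<in> ?S"
    then obtain a w where xw: "x = a#w" unfolding FF_def by (cases x) auto
    then show "x \<in> ?X \<union> ?Y" using memS[of a w] x by auto
  next
    fix x assume x: "x \<in> ?X \<union> ?Y"
    then show "x \<in> ?S"
    proof
      assume "x \<in> ?X"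
      then obtain a w where "x = a#w" "a < d j" "w \<in> FF d m" by auto
      then show ?thesis using memS[of a w] djle by auto
    next
      assume "x \<in> ?Y"
      then obtain w where w: "x = d j # w" "w \<in> FF d m" "fle w ?u" by auto
      have "\<not> flt ?p1 w" if "d j = d 0"
      proof -
        have "fle w ?p1" using fle_trans[OF w(3) lyn_fact[OF lyn that]] .
        then show ?thesis unfolding fle_def using flt_asym flt_irrefl by blast
      qed
      then show ?thesis using memS[of "d j" w] w djle by auto
    qed
  qed
  moreover have "?X \<inter> ?Y = {}" by auto
  moreover have "card ?X = d j * NN d m"
  proof -
    have "inj_on (\<lambda>(a,w). a#w) ({..<d j} \<times> FF d m)" by (auto simp: inj_on_def)
    then show ?thesis by (simp add: card_image card_cartesian_product NN_def)
  qed
  moreover have "card ?Y = UU d (Suc j) m"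
    by (simp add: card_image UU_def)
  moreover have "finite ?X" "finite ?Y" using FF_finite by auto
  ultimately show ?thesis unfolding VV_def by (simp add: card_Un_disjoint)
qed


lemma VV_rec: assumes "alt_lyndon d"
  shows "real (VV d j (Suc m)) = (real (d j) + 1) * real (NN d m) + 1 - real (VV d (Suc j) m)"
proof -
  have "UU d (Suc j) m + VV d (Suc j) m = NN d m + 1" by (rule UV[OF assms])
  then have "real (UU d (Suc j) m) = real (NN d m) + 1 - real (VV d (Suc j) m)" by linarith
  then show ?thesis using VV_Suc[OF assms, of j m] by (simp add: algebra_simps)
qed

lemma VV_closed: assumes "alt_lyndon d"
  shows "real (VV d j n) = (\<Sum>i<n. (-1)^i * ((real (d (j+i)) + 1) * real (NN d (n-1-i)) + 1)) + (-1)^n"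
proof (induction n arbitrary: j)
  case 0 then show ?case by (simp add: VV_j0)
next
  case (Suc n)
  have "real (VV d j (Suc n)) = (real (d j) + 1) * real (NN d n) + 1 - real (VV d (Suc j) n)"
    by (rule VV_rec[OF assms])
  also have "\<dots> = (real (d j) + 1) * real (NN d n) + 1
     - ((\<Sum>i<n. (-1)^i * ((real (d (Suc j+i)) + 1) * real (NN d (n-1-i)) + 1)) + (-1)^n)"
    using Suc.IH[of "Suc j"] by simp
  also have "\<dots> = (\<Sum>i<Suc n. (-1)^i * ((real (d (j+i)) + 1) * real (NN d (Suc n-1-i)) + 1)) + (-1)^Suc n"
  proof -
    have "(\<Sum>i<n. (-1)^Suc i * ((real (d (j + Suc i)) + 1) * real (NN d (Suc n-1-Suc i)) + 1))
      = - (\<Sum>i<n. (-1)^i * ((real (d (Suc j+i)) + 1) * real (NN d (n-1-i)) + 1))"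
      by (simp add: sum_negf[symmetric])
    then show ?thesis by (simp add: sum.lessThan_Suc_shift del: sum.lessThan_Suc)
  qed
  finally show ?case .
qed

definition cc :: "(nat \<Rightarrow> nat) \<Rightarrow> nat \<Rightarrow> real" where
  "cc d i = (-1)^i * (real (d i) + 1)"

definition ee :: "nat \<Rightarrow> real" where "ee n = (if even n then 1 else 0)"

lemma alt_sum: "(\<Sum>i<n. (-1::real)^i) + (-1)^n = ee n"
  by (induction n) (auto simp: ee_def)

lemma NN_rec: assumes "alt_lyndon d"
  shows "real (NN d (Suc k)) = ee (Suc k) + (\<Sum>i\<le>k. cc d i * real (NN d (k - i)))"
proof -
  have "real (NN d (Suc k)) = real (VV d 0 (Suc k))" by (simp add: VV_0)
  also have "\<dots> = (\<Sum>i<Suc k. (-1)^i * ((real (d i) + 1) * real (NN d (k-i)) + 1)) + (-1)^Suc k"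
    using VV_closed[OF assms, of 0 "Suc k"] by simp
  also have "\<dots> = (\<Sum>i<Suc k. cc d i * real (NN d (k-i))) + ((\<Sum>i<Suc k. (-1)^i) + (-1)^Suc k)"
    by (simp add: cc_def sum.distrib algebra_simps)
  also have "\<dots> = ee (Suc k) + (\<Sum>i\<le>k. cc d i * real (NN d (k - i)))"
    using alt_sum[of "Suc k"] lessThan_Suc_atMost by simp
  finally show ?thesis .
qed


lemma NN_pos: assumes "alt_lyndon d" shows "NN d n \<ge> 1"
proof -
  have "FF d n \<noteq> {}" using pre_FF[OF assms, of 0 n] by auto
  then show ?thesis unfolding NN_def using FF_finite by (simp add: Suc_le_eq card_gt_0_iff)
qed

lemma NN_0: "NN d 0 = 1" by (simp add: NN_def FF_0)

lemma FF_drop: assumes "w \<in> FF d (m + n)" shows "drop m w \<in> FF d n"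
proof -
  have h: "length w = m + n" "\<And>k. k \<le> m + n \<Longrightarrow> \<not> flt (drop k w) (pre d (m + n - k))"
    using assms unfolding FF_def by auto
  show ?thesis unfolding FF_def
  proof (intro CollectI conjI allI impI)
    show "length (drop m w) = n" using h by simp
  next
    fix k assume "k \<le> n"
    then show "\<not> flt (drop k (drop m w)) (pre d (n - k))" using h(2)[of "m+k"] by (simp add: add.commute)
  qed
qed

lemma FF_take: "w \<in> FF d (m + n) \<Longrightarrow> take m w \<in> FF d m"
  unfolding FF_def
proof (clarsimp)
  fix k assume h: "\<forall>k\<le>m + n. \<not> flt (drop k w) (pre d (m + n - k))" "k \<le> m" "length w = m + n"
    and f: "flt (drop k (take m w)) (pre d (m - k))"
  have "drop k (take m w) = take (m - k) (drop k w)" by (simp add: drop_take)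
  moreover have "pre d (m - k) = take (m - k) (pre d (m + n - k))"
    unfolding pre_def using h(2) by (simp add: take_map)
  ultimately have "flt (drop k w) (pre d (m + n - k))" using f flt_take by metis
  then show False using h by simp
qed

lemma NN_submult: "NN d (m + n) \<le> NN d m * NN d n"
proof -
  have "inj_on (\<lambda>w. (take m w, drop m w)) (FF d (m + n))"
    by (rule inj_onI) (metis append_take_drop_id prod.inject)
  moreover have "(\<lambda>w. (take m w, drop m w)) ` FF d (m + n) \<subseteq> FF d m \<times> FF d n"
    using FF_take FF_drop by auto
  ultimately have "card (FF d (m + n)) \<le> card (FF d m \<times> FF d n)"
    using card_inj_on_le FF_finite by (metis finite_cartesian_product)
  then show ?thesis by (simp add: NN_def card_cartesian_product)
qed

lemma NN_pow: "NN d (k * n) \<le> NN d n ^ k"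
proof (induction k)
  case 0 then show ?case by (simp add: NN_0)
next
  case (Suc k)
  have "NN d (Suc k * n) = NN d (n + k * n)" by simp
  also have "\<dots> \<le> NN d n * NN d (k * n)" by (rule NN_submult)
  also have "\<dots> \<le> NN d n * NN d n ^ k" using Suc by simp
  finally show ?case by simp
qed



lemma NN_lower:
  assumes lyn: "alt_lyndon d" and b: "\<beta> > 0"
    and lim: "(\<lambda>n. ln (real (NN d n)) / real n) \<longlonglongrightarrow> ln \<beta>"
  shows "\<beta> ^ n \<le> real (NN d n)"
proof (cases "n = 0")
  case True then show ?thesis by (simp add: NN_0)
next
  case False
  let ?g = "\<lambda>n. ln (real (NN d n)) / real n"
  have sm: "strict_mono (\<lambda>k. Suc k * n)" using False by (auto simp: strict_mono_def)
  have l2: "(\<lambda>k. ?g (Suc k * n)) \<longlonglongrightarrow> ln \<beta>"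
    using LIMSEQ_subseq_LIMSEQ[OF lim sm] by (simp add: comp_def)
  have pos: "\<And>m. real (NN d m) > 0" using NN_pos[OF lyn] by (simp add: Suc_le_eq)
  have bnd: "?g (Suc k * n) \<le> ln (real (NN d n)) / real n" for k
  proof -
    have "real (NN d (Suc k * n)) \<le> real (NN d n) ^ Suc k"
      using NN_pow[of d "Suc k" n] by (metis of_nat_le_iff of_nat_power)
    then have "ln (real (NN d (Suc k * n))) \<le> ln (real (NN d n) ^ Suc k)"
      using pos by (simp del: of_nat_power)
    also have "\<dots> = real (Suc k) * ln (real (NN d n))" using pos[of n] ln_realpow[of "real (NN d n)" "Suc k"] by (simp del: power_Suc of_nat_Suc)
    finally have "ln (real (NN d (Suc k * n))) \<le> real (Suc k) * ln (real (NN d n))" .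
    then have "ln (real (NN d (Suc k * n))) / real (Suc k * n) \<le> real (Suc k) * ln (real (NN d n)) / real (Suc k * n)"
      by (rule divide_right_mono) simp
    also have "\<dots> = ln (real (NN d n)) / real n"
      using False by (simp only: of_nat_mult) (simp del: of_nat_Suc)
    finally show ?thesis .
  qed
  have "ln \<beta> \<le> ln (real (NN d n)) / real n"
    using LIMSEQ_le_const2[OF l2] bnd by blast
  then have "real n * ln \<beta> \<le> ln (real (NN d n))" using False by (simp add: field_simps)
  then have "exp (real n * ln \<beta>) \<le> real (NN d n)"
    using pos by (metis exp_le_cancel_iff exp_ln)
  then show ?thesis using b by (simp add: exp_of_nat_mult)
qed


lemma NN_summable:
  assumes lyn: "alt_lyndon d" and b: "\<beta> > 0"
    and lim: "(\<lambda>n. ln (real (NN d n)) / real n) \<longlonglongrightarrow> ln \<beta>"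
    and t: "0 \<le> t" "t * \<beta> < 1"
  shows "summable (\<lambda>n. real (NN d n) * t ^ n)"
proof -
  define r where "r = \<beta> + (1 - \<beta> * t) / (2 * (t + 1))"
  have rb: "r > \<beta>" using t by (simp add: r_def algebra_simps)
  have rt: "r * t < 1"
  proof -
    have "(1 - \<beta> * t) / (2 * (t + 1)) * t \<le> (1 - \<beta> * t) / 2"
      using t by (simp add: field_simps)
    moreover have "r * t = \<beta> * t + (1 - \<beta> * t) / (2 * (t + 1)) * t"
      unfolding r_def by (simp add: distrib_right)
    moreover have "\<beta> * t < 1" using t by (simp add: mult.commute)
    moreover have "(1 - \<beta> * t) / 2 = 1/2 - (\<beta> * t) / 2" by (simp add: diff_divide_distrib)
    ultimately show ?thesis by linarith
  qed
  have rp: "r > 0" using rb b by simp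
  have ev: "eventually (\<lambda>n. ln (real (NN d n)) / real n < ln r) sequentially"
    using order_tendstoD(2)[OF lim] rb b by simp
  have pos: "\<And>m. real (NN d m) > 0" using NN_pos[OF lyn] by (simp add: Suc_le_eq)
  have "eventually (\<lambda>n. norm (real (NN d n) * t ^ n) \<le> (r * t) ^ n) sequentially"
    using ev eventually_gt_at_top[of 0]
  proof eventually_elim
    case (elim n)
    then have "ln (real (NN d n)) < real n * ln r" by (simp add: field_simps)
    then have "real (NN d n) < exp (real n * ln r)" using pos by (metis exp_less_cancel_iff exp_ln)
    then have "real (NN d n) \<le> r ^ n" using rp by (simp add: exp_of_nat_mult)
    then show ?case using t by (simp add: power_mult_distrib mult_right_mono)
  qed
  moreover have "summable (\<lambda>n. (r * t) ^ n)"
    using rt rp t by (intro summable_geometric) simp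
  ultimately show ?thesis by (rule summable_comparison_test_ev)
qed


lemma cc_bound: assumes "alt_lyndon d" shows "\<bar>cc d i\<bar> \<le> real (d 0) + 1"
  using assms unfolding alt_lyndon_def cc_def by (simp add: abs_mult)

lemma cc_summable: assumes "alt_lyndon d" "0 \<le> t" "t < 1"
  shows "summable (\<lambda>i. norm (cc d i * t ^ i))"
proof (rule summable_comparison_test_ev)
  show "eventually (\<lambda>i. norm (norm (cc d i * t ^ i)) \<le> (real (d 0) + 1) * t ^ i) sequentially"
    using cc_bound[OF assms(1)] assms(2) by (intro always_eventually allI) (auto simp: abs_mult intro!: mult_right_mono)
  show "summable (\<lambda>i. (real (d 0) + 1) * t ^ i)"
    using assms by (intro summable_mult summable_geometric) simp
qed

lemma ee_summable: assumes "0 \<le> t" "t < 1" shows "summable (\<lambda>n. ee n * t ^ n)"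
  by (rule summable_comparison_test_ev[where g = "\<lambda>n. t^n"]) (use assms in \<open>auto simp: ee_def intro!: summable_geometric\<close>)

lemma ee_bounds: assumes "0 \<le> t" "t < 1"
  shows "1 \<le> (\<Sum>n. ee n * t ^ n)" "(\<Sum>n. ee n * t ^ n) \<le> 1 / (1 - t)"
proof -
  have s: "summable (\<lambda>n. ee n * t ^ n)" by (rule ee_summable[OF assms])
  have "(\<Sum>n<1. ee n * t ^ n) \<le> (\<Sum>n. ee n * t ^ n)"
    using assms by (intro sum_le_suminf[OF s]) (auto simp: ee_def)
  then show "1 \<le> (\<Sum>n. ee n * t ^ n)" by (simp add: ee_def)
  have "(\<Sum>n. ee n * t ^ n) \<le> (\<Sum>n. t ^ n)"
    using assms s by (intro suminf_le) (auto simp: ee_def intro!: summable_geometric)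
  then show "(\<Sum>n. ee n * t ^ n) \<le> 1 / (1 - t)" using suminf_geometric[of t] assms by simp
qed

lemma series_ident:
  assumes lyn: "alt_lyndon d" and t: "0 \<le> t" "t < 1"
    and sN: "summable (\<lambda>n. real (NN d n) * t ^ n)"
  shows "(\<Sum>n. real (NN d n) * t ^ n) = (\<Sum>n. ee n * t ^ n) + t * (\<Sum>i. cc d i * t ^ i) * (\<Sum>n. real (NN d n) * t ^ n)"
proof -
  let ?a = "\<lambda>i. cc d i * t ^ i" and ?b = "\<lambda>n. real (NN d n) * t ^ n"
  have sb: "summable (\<lambda>n. norm (?b n))" using sN t by simp
  have cp: "(\<lambda>k. \<Sum>i\<le>k. ?a i * ?b (k - i)) sums ((\<Sum>k. ?a k) * (\<Sum>k. ?b k))"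
    by (rule Cauchy_product_sums[OF cc_summable[OF lyn t] sb])
  have eq: "(\<Sum>i\<le>k. ?a i * ?b (k - i)) = t ^ k * (\<Sum>i\<le>k. cc d i * real (NN d (k - i)))" for k
  proof -
    have "t ^ i * t ^ (k - i) = t ^ k" if "i \<le> k" for i
      using that by (simp add: power_add[symmetric])
    then have "\<And>i. i \<in> {..k} \<Longrightarrow> ?a i * ?b (k - i) = t ^ k * (cc d i * real (NN d (k - i)))"
      by (simp add: algebra_simps)
    then have "(\<Sum>i\<le>k. ?a i * ?b (k - i)) = (\<Sum>i\<le>k. t ^ k * (cc d i * real (NN d (k - i))))"
      by (rule sum.cong[OF refl])
    then show ?thesis by (simp add: sum_distrib_left)
  qed
  have c2: "(\<lambda>k. t ^ Suc k * (\<Sum>i\<le>k. cc d i * real (NN d (k - i)))) sums (t * ((\<Sum>k. ?a k) * (\<Sum>k. ?b k)))"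
    using sums_mult[OF cp, of t] eq by (simp add: algebra_simps)
  have e2: "(\<lambda>k. ee (Suc k) * t ^ Suc k) sums ((\<Sum>n. ee n * t ^ n) - ee 0 * t ^ 0)"
    using sums_Suc_iff[of "\<lambda>n. ee n * t ^ n"] summable_sums[OF ee_summable[OF t]] by simp
  have "(\<lambda>k. ?b (Suc k)) sums ((\<Sum>n. ee n * t ^ n) - ee 0 * t ^ 0 + t * ((\<Sum>k. ?a k) * (\<Sum>k. ?b k)))"
  proof -
    have "?b (Suc k) = ee (Suc k) * t ^ Suc k + t ^ Suc k * (\<Sum>i\<le>k. cc d i * real (NN d (k - i)))" for k
      using NN_rec[OF lyn, of k] by (simp add: algebra_simps)
    then show ?thesis using sums_add[OF e2 c2] by simp
  qed
  then have "?b sums ((\<Sum>n. ee n * t ^ n) - ee 0 * t ^ 0 + t * ((\<Sum>k. ?a k) * (\<Sum>k. ?b k)) + ?b 0)"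
    by (subst sums_Suc_iff[symmetric])
  moreover have "?b 0 = 1" "ee 0 = 1" by (simp_all add: NN_0 ee_def)
  ultimately have "?b sums ((\<Sum>n. ee n * t ^ n) + t * (\<Sum>k. ?a k) * (\<Sum>k. ?b k))"
    by (simp add: algebra_simps)
  then show ?thesis by (simp add: sums_iff)
qed


lemma char_iff:
  assumes lyn: "alt_lyndon d" and x: "x > 1"
  shows "char_solution d x \<longleftrightarrow> (1/x) * (\<Sum>i. cc d i * (1/x) ^ i) = 1"
proof -
  define t where "t = 1 / x"
  have t: "0 < t" "t < 1" using x by (auto simp: t_def)
  define G where "G = t * (\<Sum>i. cc d i * t ^ i)"
  have sA: "(\<lambda>i. cc d i * t ^ i) sums (\<Sum>i. cc d i * t ^ i)"
    using summable_sums[OF summable_norm_cancel[OF cc_summable[OF lyn]]] t by simp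
  have sG: "(\<lambda>i. t * (cc d i * t ^ i)) sums G" unfolding G_def by (rule sums_mult[OF sA])
  have sgeo: "(\<lambda>i. (-t) ^ i) sums (1 / (1 + t))" using geometric_sums[of "-t"] t by simp
  have sg2: "(\<lambda>i. t * (-t) ^ i) sums (t / (1 + t))" using sums_mult[OF sgeo, of t] by simp
  have "(\<lambda>i. t * (-t) ^ i - t * (cc d i * t ^ i)) sums (t / (1 + t) - G)"
    by (rule sums_diff[OF sg2 sG])
  moreover have "t * (-t) ^ i - t * (cc d i * t ^ i) = real (d i) / (- x) ^ (i + 1)" for i
  proof -
    have "(- x) ^ (i + 1) * (- t) ^ (i + 1) = ((- x) * (- t)) ^ (i + 1)" by (rule power_mult_distrib[symmetric])
    also have "(- x) * (- t) = 1" using x by (simp add: t_def)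
    finally have e1: "(- x) ^ (i + 1) * (- t) ^ (i + 1) = 1" by simp
    then have "(- x) ^ (i + 1) \<noteq> 0" by auto
    then have "real (d i) / (- x) ^ (i + 1) = real (d i) * (- t) ^ (i + 1)"
      using e1 by (simp add: field_simps)
    moreover have "cc d i * t ^ i = (real (d i) + 1) * (- t) ^ i"
      by (simp add: cc_def power_minus')
    ultimately show ?thesis by (simp add: algebra_simps)
  qed
  ultimately have sS: "(\<lambda>i. real (d i) / (- x) ^ (i + 1)) sums (t / (1 + t) - G)" by simp
  have "char_solution d x \<longleftrightarrow> t / (1 + t) - G = - x / (x + 1)"
    unfolding char_solution_def using x sS sums_unique2 by (auto intro: sums_unique2)
  also have "- x / (x + 1) = - 1 / (1 + t)" using x by (simp add: t_def field_simps)
  also have "t / (1 + t) - G = - 1 / (1 + t) \<longleftrightarrow> G = t / (1 + t) + 1 / (1 + t)" by auto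
  also have "t / (1 + t) + 1 / (1 + t) = 1" using t by (simp add: add_divide_distrib[symmetric])
  finally show ?thesis unfolding G_def t_def .
qed


lemma key_bounds:
  assumes lyn: "alt_lyndon d" and b: "\<beta> > 1"
    and lim: "(\<lambda>n. ln (real (NN d n)) / real n) \<longlonglongrightarrow> ln \<beta>"
    and t: "0 < t" "t * \<beta> < 1"
  shows "0 < 1 - t * (\<Sum>i. cc d i * t ^ i)"
    "1 - t * (\<Sum>i. cc d i * t ^ i) \<le> (1 - \<beta> * t) / (1 - t)"
proof -
  have t1: "t < 1" using t b by (metis less_trans mult.right_neutral mult_strict_left_mono)
  have sN: "summable (\<lambda>n. real (NN d n) * t ^ n)"
    using NN_summable[OF lyn _ lim _ t(2)] b t by simp
  define F where "F = (\<Sum>n. real (NN d n) * t ^ n)"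
  define E where "E = (\<Sum>n. ee n * t ^ n)"
  define G where "G = t * (\<Sum>i. cc d i * t ^ i)"
  have id: "F = E + G * F" using series_ident[OF lyn _ t1 sN] t unfolding F_def E_def G_def by simp
  have E1: "1 \<le> E" "E \<le> 1 / (1 - t)" using ee_bounds[of t] t t1 unfolding E_def by auto
  have bt: "0 \<le> \<beta> * t" "\<beta> * t < 1" using t b by (auto simp: mult.commute)
  have Flow: "1 / (1 - \<beta> * t) \<le> F"
  proof -
    have "(\<Sum>n. (\<beta> * t) ^ n) \<le> F" unfolding F_def
    proof (rule suminf_le)
      show "(\<beta> * t) ^ n \<le> real (NN d n) * t ^ n" for n
        using NN_lower[OF lyn _ lim, of n] b t by (simp add: power_mult_distrib mult_right_mono)
      show "summable (\<lambda>n. (\<beta> * t) ^ n)" using bt by (intro summable_geometric) simp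
    qed (rule sN)
    then show ?thesis using suminf_geometric[of "\<beta> * t"] bt by simp
  qed
  have Fpos: "F > 0" using Flow bt by (smt (verit) divide_pos_pos)
  have "F * (1 - G) = E" using id by (simp add: algebra_simps)
  then have eq: "1 - G = E / F" using Fpos by (simp add: field_simps)
  show "0 < 1 - t * (\<Sum>i. cc d i * t ^ i)" using eq E1 Fpos unfolding G_def by simp
  have "E / F \<le> (1 / (1 - t)) / (1 / (1 - \<beta> * t))"
    using E1 Flow Fpos bt t1 by (intro frac_le) auto
  also have "\<dots> = (1 - \<beta> * t) / (1 - t)" by simp
  finally show "1 - t * (\<Sum>i. cc d i * t ^ i) \<le> (1 - \<beta> * t) / (1 - t)" using eq unfolding G_def by simp
qed



theorem proposition3:
  fixes d :: "nat \<Rightarrow> nat" and \<beta> :: real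
  assumes "alt_lyndon d"
    and "has_entropy (alt_lyndon_system d) (ln \<beta>)"
    and "\<beta> > 0" and "ln \<beta> > 0"
  shows "char_solution d \<beta> \<and> (\<forall>x. char_solution d x \<longrightarrow> x \<le> \<beta>)"
proof -
  note lyn = assms(1)
  have lim: "(\<lambda>n. ln (real (NN d n)) / real n) \<longlonglongrightarrow> ln \<beta>"
    using assms(2) unfolding has_entropy_def NN_def factors_eq[OF lyn] .
  have b1: "\<beta> > 1" using assms(3,4) by simp
  define G where "G t = t * (\<Sum>i. cc d i * t ^ i)" for t
  define t0 where "t0 = 1 / \<beta>"
  have t0: "0 < t0" "t0 < 1" "t0 * \<beta> = 1" using b1 by (auto simp: t0_def)
  have upper: "\<forall>x. char_solution d x \<longrightarrow> x \<le> \<beta>"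
  proof (intro allI impI)
    fix x assume cs: "char_solution d x"
    show "x \<le> \<beta>"
    proof (rule ccontr)
      assume "\<not> x \<le> \<beta>"
      then have xb: "x > \<beta>" by simp
      then have x1: "x > 1" using b1 by simp
      have "G (1/x) = 1" using char_iff[OF lyn x1] cs unfolding G_def by simp
      moreover have "0 < 1 - G (1/x)"
        unfolding G_def using xb b1 by (intro key_bounds(1)[OF lyn b1 lim]) (auto simp: field_simps)
      ultimately show False by simp
    qed
  qed
  have cont: "isCont G t0"
  proof -
    define K where "K = (1 + t0) / 2"
    have K: "0 \<le> K" "K < 1" "t0 < K" using t0 by (auto simp: K_def)
    have "summable (\<lambda>n. cc d n * K ^ n)"
      using summable_norm_cancel[OF cc_summable[OF lyn K(1,2)]] .
    then have "isCont (\<lambda>t. \<Sum>n. cc d n * t ^ n) t0"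
      by (rule isCont_powser) (use K t0 in simp)
    then show ?thesis unfolding G_def by (intro isCont_mult continuous_ident)
  qed
  have l1: "((\<lambda>t. 1 - G t) \<longlongrightarrow> 1 - G t0) (at_left t0)"
  proof -
    have gl: "(G \<longlongrightarrow> G t0) (at_left t0)"
      using cont unfolding isCont_def by (rule tendsto_mono[rotated]) (rule at_within_le_at)
    show ?thesis by (rule tendsto_diff[OF tendsto_const gl])
  qed
  have l2: "((\<lambda>t. (1 - \<beta> * t) / (1 - t)) \<longlongrightarrow> 0) (at_left t0)"
  proof -
    have "((\<lambda>t. (1 - \<beta> * t) / (1 - t)) \<longlongrightarrow> (1 - \<beta> * t0) / (1 - t0)) (at_left t0)"
      using t0 by (intro tendsto_intros) auto
    then show ?thesis using t0 by (simp add: mult.commute)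
  qed
  have ev: "eventually (\<lambda>t. t \<in> {0<..<t0}) (at_left t0)" by (rule eventually_at_left_real) (use t0 in simp)
  have ev1: "eventually (\<lambda>t. 0 \<le> 1 - G t) (at_left t0)"
    using ev
  proof eventually_elim
    case (elim t)
    then have "t * \<beta> < 1" using t0 b1 by (auto simp: t0_def field_simps)
    then show ?case unfolding G_def using key_bounds(1)[OF lyn b1 lim, of t] elim by simp
  qed
  have ev2: "eventually (\<lambda>t. 1 - G t \<le> (1 - \<beta> * t) / (1 - t)) (at_left t0)"
    using ev
  proof eventually_elim
    case (elim t)
    then have "t * \<beta> < 1" using t0 b1 by (auto simp: t0_def field_simps)
    then show ?case unfolding G_def using key_bounds(2)[OF lyn b1 lim, of t] elim by simp
  qed
  have "0 \<le> 1 - G t0" by (rule tendsto_lowerbound[OF l1 ev1]) simp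
  moreover have "1 - G t0 \<le> 0" by (rule tendsto_le[OF _ l2 l1 ev2]) simp
  ultimately have "G t0 = 1" by simp
  then have "char_solution d \<beta>" using char_iff[OF lyn b1] unfolding G_def t0_def by simp
  with upper show ?thesis by simp
qed


end
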